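(* Let $\mathscr{M}_n$ be the monoid of multipermutations on $[n]$, let $D$ be a $\mathcal{D}$-class of $\mathscr{M}_n$ containing a prime element, and let $T$ be a generating set of the monoid $\mathscr{M}_n$. Then $D\cap T\neq\emptyset$.
   Context: A multipermutation on $[n]$ is a binary relation on $[n]$ in which every element has at least one successor and at least one predecessor (equivalently an $n\times n$ Boolean matrix with no zero row or column); $\mathscr{M}_n$ is the monoid of these under composition of relations (Boolean matrix multiplication), a submonoid of the monoid $\mathcal{B}_n$ of all binary relations on $[n]$. An element $\alpha\in\mathcal{B}_n$ is prime if it is not a permutation and whenever $\alpha=\beta\gamma$ with $\beta,\gamma\in\mathcal{B}_n$, one of $\beta,\gamma$ is a permutation. $\mathcal{D}$ denotes Green's $\mathcal{D}$-relation of $\mathscr{M}_n$. *)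

theory Defs
  imports Main
begin

text \<open>Binary relations on [n] are modelled as relations on {..<n}, i.e. subsets of
  {..<n} \<times> {..<n}; the product of relations (Boolean matrix product) is relcomp (O).\<close>

definition brel :: "nat \<Rightarrow> nat rel set" where
  "brel n = {R. R \<subseteq> {..<n} \<times> {..<n}}"

definition is_multiperm :: "nat \<Rightarrow> nat rel \<Rightarrow> bool" where
  "is_multiperm n R \<longleftrightarrow> R \<in> brel n \<and>
     (\<forall>i<n. (\<exists>j. (i, j) \<in> R)) \<and> (\<forall>j<n. (\<exists>i. (i, j) \<in> R))"

definition multiperms :: "nat \<Rightarrow> nat rel set" where
  "multiperms n = {R. is_multiperm n R}"

definition is_perm_rel :: "nat \<Rightarrow> nat rel \<Rightarrow> bool" where
  "is_perm_rel n R \<longleftrightarrow> R \<in> brel n \<and>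
     (\<forall>i<n. \<exists>!j. (i, j) \<in> R) \<and> (\<forall>j<n. \<exists>!i. (i, j) \<in> R)"

definition is_prime_rel :: "nat \<Rightarrow> nat rel \<Rightarrow> bool" where
  "is_prime_rel n a \<longleftrightarrow> a \<in> brel n \<and> \<not> is_perm_rel n a \<and>
     (\<forall>b \<in> brel n. \<forall>c \<in> brel n. a = b O c \<longrightarrow> is_perm_rel n b \<or> is_perm_rel n c)"

definition greenL :: "nat \<Rightarrow> nat rel \<Rightarrow> nat rel \<Rightarrow> bool" where
  "greenL n a b \<longleftrightarrow> a \<in> multiperms n \<and> b \<in> multiperms n \<and>
     (a = b \<or> (\<exists>x \<in> multiperms n. a = x O b)) \<and> (b = a \<or> (\<exists>y \<in> multiperms n. b = y O a))"

definition greenR :: "nat \<Rightarrow> nat rel \<Rightarrow> nat rel \<Rightarrow> bool" where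
  "greenR n a b \<longleftrightarrow> a \<in> multiperms n \<and> b \<in> multiperms n \<and>
     (a = b \<or> (\<exists>x \<in> multiperms n. a = b O x)) \<and> (b = a \<or> (\<exists>y \<in> multiperms n. b = a O y))"

definition greenD :: "nat \<Rightarrow> nat rel \<Rightarrow> nat rel \<Rightarrow> bool" where
  "greenD n a b \<longleftrightarrow> (\<exists>c. greenL n a c \<and> greenR n c b)"

definition is_D_class :: "nat \<Rightarrow> nat rel set \<Rightarrow> bool" where
  "is_D_class n D \<longleftrightarrow> (\<exists>a \<in> multiperms n. D = {b. greenD n a b})"

inductive_set gen_monoid :: "nat \<Rightarrow> nat rel set \<Rightarrow> nat rel set" for n T where
  gen_id: "Id_on {..<n} \<in> gen_monoid n T"
| gen_base: "t \<in> T \<Longrightarrow> t \<in> gen_monoid n T"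
| gen_mult: "x \<in> gen_monoid n T \<Longrightarrow> y \<in> gen_monoid n T \<Longrightarrow> x O y \<in> gen_monoid n T"

definition generates :: "nat \<Rightarrow> nat rel set \<Rightarrow> bool" where
  "generates n T \<longleftrightarrow> T \<subseteq> multiperms n \<and> gen_monoid n T = multiperms n"

end

theory Submission
  imports Defs
begin

lemma perm_brel: "is_perm_rel n a \<Longrightarrow> a \<in> brel n"
  by (simp add: is_perm_rel_def)

lemma brel_comp: "a \<in> brel n \<Longrightarrow> b \<in> brel n \<Longrightarrow> a O b \<in> brel n"
  unfolding brel_def by blast

lemma perm_comp: "is_perm_rel n a \<Longrightarrow> is_perm_rel n b \<Longrightarrow> is_perm_rel n (a O b)"
proof -
  assume A: "is_perm_rel n a" and B: "is_perm_rel n b"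
  have ab: "a \<subseteq> {..<n} \<times> {..<n}" "b \<subseteq> {..<n} \<times> {..<n}" using A B unfolding is_perm_rel_def brel_def by auto
  have a1: "\<And>i j j'. (i,j) \<in> a \<Longrightarrow> (i,j') \<in> a \<Longrightarrow> j = j'"
    using A ab unfolding is_perm_rel_def by blast
  have b1: "\<And>i j j'. (i,j) \<in> b \<Longrightarrow> (i,j') \<in> b \<Longrightarrow> j = j'"
    using B ab unfolding is_perm_rel_def by blast
  have a2: "\<And>i j j'. (j,i) \<in> a \<Longrightarrow> (j',i) \<in> a \<Longrightarrow> j = j'"
    using A ab unfolding is_perm_rel_def by blast
  have b2: "\<And>i j j'. (j,i) \<in> b \<Longrightarrow> (j',i) \<in> b \<Longrightarrow> j = j'"
    using B ab unfolding is_perm_rel_def by blast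
  have a3: "\<And>i. i < n \<Longrightarrow> \<exists>j. (i,j) \<in> a" "\<And>i. i < n \<Longrightarrow> \<exists>j. (j,i) \<in> a"
    using A unfolding is_perm_rel_def by blast+
  have b3: "\<And>i. i < n \<Longrightarrow> \<exists>j. (i,j) \<in> b" "\<And>i. i < n \<Longrightarrow> \<exists>j. (j,i) \<in> b"
    using B unfolding is_perm_rel_def by blast+
  have e1: "\<exists>k. (i,k) \<in> a O b" if i: "i < n" for i
  proof -
    obtain j where j: "(i,j) \<in> a" using a3(1) i by blast
    then have "j < n" using ab by blast
    then obtain k where "(j,k) \<in> b" using b3(1) by blast
    then show ?thesis using j by blast
  qed
  have e2: "\<exists>k. (k,i) \<in> a O b" if i: "i < n" for i
  proof -
    obtain j where j: "(j,i) \<in> b" using b3(2) i by blast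
    then have "j < n" using ab by blast
    then obtain k where "(k,j) \<in> a" using a3(2) by blast
    then show ?thesis using j by blast
  qed
  have u1: "k = k'" if "(i,k) \<in> a O b" "(i,k') \<in> a O b" for i k k'
    using that a1 b1 by blast
  have u2: "k = k'" if "(k,i) \<in> a O b" "(k',i) \<in> a O b" for i k k'
    using that a2 b2 by blast
  have "a O b \<in> brel n" using ab unfolding brel_def by blast
  then show ?thesis unfolding is_perm_rel_def using e1 e2 u1 u2 by blast
qed

lemma perm_inv1: "is_perm_rel n a \<Longrightarrow> a\<inverse> O a = Id_on {..<n}"
proof -
  assume A: "is_perm_rel n a"
  have ab: "a \<subseteq> {..<n} \<times> {..<n}" using A unfolding is_perm_rel_def brel_def by auto
  have a2: "\<And>i j j'. (i,j) \<in> a \<Longrightarrow> (i,j') \<in> a \<Longrightarrow> j = j'"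
    using A ab unfolding is_perm_rel_def by blast
  have a3: "\<And>i. i < n \<Longrightarrow> \<exists>j. (j,i) \<in> a"
    using A unfolding is_perm_rel_def by blast
  show ?thesis using a2 a3 ab by (auto simp: Id_on_def) blast+
qed

lemma perm_inv2: "is_perm_rel n a \<Longrightarrow> a O a\<inverse> = Id_on {..<n}"
proof -
  assume A: "is_perm_rel n a"
  have ab: "a \<subseteq> {..<n} \<times> {..<n}" using A unfolding is_perm_rel_def brel_def by auto
  have a2: "\<And>i j j'. (j,i) \<in> a \<Longrightarrow> (j',i) \<in> a \<Longrightarrow> j = j'"
    using A ab unfolding is_perm_rel_def by blast
  have a3: "\<And>i. i < n \<Longrightarrow> \<exists>j. (i,j) \<in> a"
    using A unfolding is_perm_rel_def by blast
  show ?thesis using a2 a3 ab by (auto simp: Id_on_def) blast+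
qed
lemma perm_conv: "is_perm_rel n a \<Longrightarrow> is_perm_rel n (a\<inverse>)"
proof -
  assume A: "is_perm_rel n a"
  have 1: "a\<inverse> \<in> brel n" using A unfolding is_perm_rel_def brel_def by blast
  have 2: "\<forall>i<n. \<exists>!j. (i, j) \<in> a\<inverse>" using A unfolding is_perm_rel_def converse_iff by blast
  have 3: "\<forall>i<n. \<exists>!j. (j, i) \<in> a\<inverse>" using A unfolding is_perm_rel_def converse_iff by blast
  show ?thesis unfolding is_perm_rel_def using 1 2 3 by blast
qed

lemma id_left: "R \<in> brel n \<Longrightarrow> Id_on {..<n} O R = R"
  unfolding brel_def by blast

lemma id_right: "R \<in> brel n \<Longrightarrow> R O Id_on {..<n} = R"
  unfolding brel_def by blast

lemma id_perm: "is_perm_rel n (Id_on {..<n})"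
  unfolding is_perm_rel_def brel_def by blast

lemma mp_comp: "a \<in> multiperms n \<Longrightarrow> b \<in> multiperms n \<Longrightarrow> a O b \<in> multiperms n"
proof -
  assume A: "a \<in> multiperms n" and B: "b \<in> multiperms n"
  have ab: "a \<subseteq> {..<n} \<times> {..<n}" "b \<subseteq> {..<n} \<times> {..<n}" using A B
    unfolding multiperms_def is_multiperm_def brel_def by auto
  have a3: "\<And>i. i < n \<Longrightarrow> \<exists>j. (i,j) \<in> a" "\<And>i. i < n \<Longrightarrow> \<exists>j. (j,i) \<in> a"
    using A unfolding multiperms_def is_multiperm_def by blast+
  have b3: "\<And>i. i < n \<Longrightarrow> \<exists>j. (i,j) \<in> b" "\<And>i. i < n \<Longrightarrow> \<exists>j. (j,i) \<in> b"
    using B unfolding multiperms_def is_multiperm_def by blast+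
  have e1: "\<exists>k. (i,k) \<in> a O b" if i: "i < n" for i
  proof -
    obtain j where j: "(i,j) \<in> a" using a3(1) i by blast
    then have "j < n" using ab by blast
    then obtain k where "(j,k) \<in> b" using b3(1) by blast
    then show ?thesis using j by blast
  qed
  have e2: "\<exists>k. (k,i) \<in> a O b" if i: "i < n" for i
  proof -
    obtain j where j: "(j,i) \<in> b" using b3(2) i by blast
    then have "j < n" using ab by blast
    then obtain k where "(k,j) \<in> a" using a3(2) by blast
    then show ?thesis using j by blast
  qed
  have "a O b \<in> brel n" using ab unfolding brel_def by blast
  then show ?thesis unfolding multiperms_def is_multiperm_def using e1 e2 by blast
qed

lemma perm_mp: "is_perm_rel n a \<Longrightarrow> a \<in> multiperms n"
  unfolding multiperms_def is_multiperm_def is_perm_rel_def by blast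

lemma mp_brel: "a \<in> multiperms n \<Longrightarrow> a \<in> brel n"
  unfolding multiperms_def is_multiperm_def by blast

lemma gen_brel: "x \<in> gen_monoid n T \<Longrightarrow> T \<subseteq> multiperms n \<Longrightarrow> x \<in> brel n"
  by (induction rule: gen_monoid.induct) (auto simp: brel_def multiperms_def is_multiperm_def)

lemma main_ind:
  assumes "x \<in> gen_monoid n T" "T \<subseteq> multiperms n"
  shows "\<forall>\<sigma> \<tau>. is_perm_rel n \<sigma> \<longrightarrow> is_perm_rel n \<tau> \<longrightarrow> is_prime_rel n (\<sigma> O x O \<tau>) \<longrightarrow>
     (\<exists>t\<in>T. \<exists>\<alpha> \<beta>. is_perm_rel n \<alpha> \<and> is_perm_rel n \<beta> \<and> \<sigma> O x O \<tau> = \<alpha> O t O \<beta>)"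
  using assms
proof (induction rule: gen_monoid.induct)
  case gen_id
  show ?case
  proof (intro allI impI)
    fix \<sigma> \<tau> assume s: "is_perm_rel n \<sigma>" and t: "is_perm_rel n \<tau>" and p: "is_prime_rel n (\<sigma> O Id_on {..<n} O \<tau>)"
    have "Id_on {..<n} O \<tau> = \<tau>" using id_left[OF perm_brel[OF t]] .
    then have "is_perm_rel n (\<sigma> O Id_on {..<n} O \<tau>)" using perm_comp[OF s t] by simp
    then have False using p unfolding is_prime_rel_def by simp
    then show "\<exists>t\<in>T. \<exists>\<alpha> \<beta>. is_perm_rel n \<alpha> \<and> is_perm_rel n \<beta> \<and> \<sigma> O Id_on {..<n} O \<tau> = \<alpha> O t O \<beta>" ..
  qed
next
  case (gen_base t)
  show ?case
  proof (intro allI impI)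
    fix \<sigma> \<tau> assume s: "is_perm_rel n \<sigma>" and t: "is_perm_rel n \<tau>"
    show "\<exists>ta\<in>T. \<exists>\<alpha> \<beta>. is_perm_rel n \<alpha> \<and> is_perm_rel n \<beta> \<and> \<sigma> O t O \<tau> = \<alpha> O ta O \<beta>"
      using s t gen_base(1) by blast
  qed
next
  case (gen_mult x y)
  note IHx = gen_mult.IH(1)[OF gen_mult.prems]
  note IHy = gen_mult.IH(2)[OF gen_mult.prems]
  have xb: "x \<in> brel n" using gen_brel[OF gen_mult.hyps(1) gen_mult.prems] .
  have yb: "y \<in> brel n" using gen_brel[OF gen_mult.hyps(2) gen_mult.prems] .
  show ?case
  proof (intro allI impI)
    fix \<sigma> \<tau> assume s: "is_perm_rel n \<sigma>" and t: "is_perm_rel n \<tau>" and p: "is_prime_rel n (\<sigma> O (x O y) O \<tau>)"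
    have eq: "\<sigma> O (x O y) O \<tau> = (\<sigma> O x) O (y O \<tau>)" by (simp add: O_assoc)
    have b1: "\<sigma> O x \<in> brel n" using brel_comp[OF perm_brel[OF s] xb] .
    have b2: "y O \<tau> \<in> brel n" using brel_comp[OF yb perm_brel[OF t]] .
    have "\<forall>b \<in> brel n. \<forall>c \<in> brel n. \<sigma> O (x O y) O \<tau> = b O c \<longrightarrow> is_perm_rel n b \<or> is_perm_rel n c"
      using p unfolding is_prime_rel_def by blast
    then have "is_perm_rel n (\<sigma> O x) \<or> is_perm_rel n (y O \<tau>)"
      using b1 b2 eq by blast
    then show "\<exists>ta\<in>T. \<exists>\<alpha> \<beta>. is_perm_rel n \<alpha> \<and> is_perm_rel n \<beta> \<and> \<sigma> O (x O y) O \<tau> = \<alpha> O ta O \<beta>"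
    proof
      assume a: "is_perm_rel n (\<sigma> O x)"
      have e: "\<sigma> O (x O y) O \<tau> = (\<sigma> O x) O y O \<tau>" by (simp add: O_assoc)
      have "is_prime_rel n ((\<sigma> O x) O y O \<tau>)" using p e by simp
      then have "\<exists>ta\<in>T. \<exists>\<alpha> \<beta>. is_perm_rel n \<alpha> \<and> is_perm_rel n \<beta> \<and> (\<sigma> O x) O y O \<tau> = \<alpha> O ta O \<beta>"
        using IHy a t by blast
      then show ?thesis using e by simp
    next
      assume a: "is_perm_rel n (y O \<tau>)"
      have e: "\<sigma> O (x O y) O \<tau> = \<sigma> O x O (y O \<tau>)" by (simp add: O_assoc)
      have "is_prime_rel n (\<sigma> O x O (y O \<tau>))" using p e by simp
      then have "\<exists>ta\<in>T. \<exists>\<alpha> \<beta>. is_perm_rel n \<alpha> \<and> is_perm_rel n \<beta> \<and> \<sigma> O x O (y O \<tau>) = \<alpha> O ta O \<beta>"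
        using IHx a s by blast
      then show ?thesis using e by simp
    qed
  qed
qed

theorem lemma4p7:
  fixes n :: nat and D T :: "nat rel set"
  assumes "is_D_class n D"
    and "\<exists>p \<in> D. is_prime_rel n p"
    and "generates n T"
  shows "D \<inter> T \<noteq> {}"
proof -
  obtain a where aD: "D = {b. greenD n a b}" using assms(1) unfolding is_D_class_def by blast
  obtain p where pD: "p \<in> D" and pp: "is_prime_rel n p" using assms(2) by blast
  have gap: "greenD n a p" using pD aD by simp
  then obtain c where L: "greenL n a c" and R: "greenR n c p" unfolding greenD_def by blast
  have pm: "p \<in> multiperms n" using R unfolding greenR_def by blast
  have TM: "T \<subseteq> multiperms n" and GM: "gen_monoid n T = multiperms n"
    using assms(3) unfolding generates_def by auto
  have pg: "p \<in> gen_monoid n T" using pm GM by simp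
  have pb: "p \<in> brel n" using pm mp_brel by blast
  have "is_prime_rel n (Id_on {..<n} O p O Id_on {..<n})"
    using pp id_left[OF pb] id_right[OF pb] by simp
  then obtain t \<alpha> \<beta> where tT: "t \<in> T" and al: "is_perm_rel n \<alpha>" and be: "is_perm_rel n \<beta>"
    and peq0: "Id_on {..<n} O p O Id_on {..<n} = \<alpha> O t O \<beta>"
    using main_ind[OF pg TM] id_perm by blast
  have peq: "p = \<alpha> O t O \<beta>" using peq0 id_left[OF pb] id_right[OF pb] by simp
  have tb: "t \<in> brel n" using tT TM mp_brel by blast
  have tm: "t \<in> multiperms n" using tT TM by blast
  have am: "a \<in> multiperms n" and cm: "c \<in> multiperms n" using L unfolding greenL_def by auto
  define c' where "c' = \<alpha>\<inverse> O c"
  have c'm: "c' \<in> multiperms n" unfolding c'_def using mp_comp perm_mp perm_conv al cm by blast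
  have cb: "c \<in> brel n" using cm mp_brel by blast
  have cc': "c = \<alpha> O c'" unfolding c'_def
    using perm_inv2[OF al] id_left[OF cb] by (simp add: O_assoc[symmetric])
  have "\<alpha>\<inverse> O p O \<beta>\<inverse> = (\<alpha>\<inverse> O \<alpha>) O t O (\<beta> O \<beta>\<inverse>)" by (simp add: peq O_assoc)
  then have tinv: "t = \<alpha>\<inverse> O p O \<beta>\<inverse>"
    using perm_inv1[OF al] perm_inv2[OF be] id_left[OF tb] id_right[OF tb] by simp
  have aim: "\<alpha>\<inverse> \<in> multiperms n" and bim: "\<beta>\<inverse> \<in> multiperms n"
    and amm: "\<alpha> \<in> multiperms n" and bmm: "\<beta> \<in> multiperms n"
    using perm_mp perm_conv al be by blast+
  have L': "greenL n a c'"
  proof -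
    have 1: "a = c' \<or> (\<exists>x \<in> multiperms n. a = x O c')"
    proof -
      have "a = c \<or> (\<exists>x \<in> multiperms n. a = x O c)" using L unfolding greenL_def by blast
      then show ?thesis
      proof
        assume "a = c" then show ?thesis using cc' amm by blast
      next
        assume "\<exists>x \<in> multiperms n. a = x O c"
        then obtain x where "x \<in> multiperms n" "a = x O c" by blast
        then show ?thesis using cc' amm mp_comp by (metis O_assoc)
      qed
    qed
    have 2: "c' = a \<or> (\<exists>y \<in> multiperms n. c' = y O a)"
    proof -
      have "c = a \<or> (\<exists>y \<in> multiperms n. c = y O a)" using L unfolding greenL_def by blast
      then show ?thesis
      proof
        assume "c = a" then show ?thesis using c'_def aim by blast
      next
        assume "\<exists>y \<in> multiperms n. c = y O a"
        then obtain y where "y \<in> multiperms n" "c = y O a" by blast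
        then show ?thesis using c'_def aim mp_comp by (metis O_assoc)
      qed
    qed
    show ?thesis unfolding greenL_def using 1 2 am c'm by blast
  qed
  have R': "greenR n c' t"
  proof -
    have 1: "c' = t \<or> (\<exists>x \<in> multiperms n. c' = t O x)"
    proof -
      have "c = p \<or> (\<exists>x \<in> multiperms n. c = p O x)" using R unfolding greenR_def by blast
      then show ?thesis
      proof
        assume "c = p"
        then have "c' = t O \<beta>" unfolding c'_def
          using peq perm_inv1[OF al] id_left[OF tb] by (simp add: O_assoc[symmetric])
        then show ?thesis using bmm by blast
      next
        assume "\<exists>x \<in> multiperms n. c = p O x"
        then obtain x where x: "x \<in> multiperms n" "c = p O x" by blast
        have xb: "x \<in> brel n" using x mp_brel by blast
        have "c' = t O (\<beta> O x)" unfolding c'_def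
          using x peq perm_inv1[OF al] id_left[OF tb] id_left[OF xb]
          by (simp add: O_assoc[symmetric])
        then show ?thesis using bmm x mp_comp by blast
      qed
    qed
    have 2: "t = c' \<or> (\<exists>y \<in> multiperms n. t = c' O y)"
    proof -
      have "p = c \<or> (\<exists>y \<in> multiperms n. p = c O y)" using R unfolding greenR_def by blast
      then show ?thesis
      proof
        assume "p = c"
        then have "t = c' O \<beta>\<inverse>" unfolding c'_def using tinv by (simp add: O_assoc)
        then show ?thesis using bim by blast
      next
        assume "\<exists>y \<in> multiperms n. p = c O y"
        then obtain y where y: "y \<in> multiperms n" "p = c O y" by blast
        have "t = c' O (y O \<beta>\<inverse>)" unfolding c'_def using tinv y by (simp add: O_assoc)
        then show ?thesis using bim y mp_comp by blast
      qed
    qed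
    show ?thesis unfolding greenR_def using 1 2 c'm tm by blast
  qed
  have "t \<in> D" using aD L' R' unfolding greenD_def by blast
  then show ?thesis using tT by blast
qed

end
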